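(* Let $\varphi\in\mathcal{L}$. If there is a finite quasi-notional graded doxastic model (QNGDM) $M$ and a world $w$ of $M$ with $(M,w)\models\varphi$, then there exists a finite notional graded doxastic model (NGDM) $M''$ and a world $w''$ of $M''$ with $(M'',w'')\models\varphi$.
   Context: Fix a countably infinite set of atoms $\mathit{Atm}$ and a finite set of agents $\mathit{Agt}=\{1,\dots,n\}$; a group is a non-empty subset $J\subseteq\mathit{Agt}$, and $2^{\mathit{Agt}*}$ denotes the set of groups. $\mathbb{N}_0$ (resp. $\mathbb{N}_1$) are the naturals with (resp. without) $0$, and $\mathbb{N}_0^{\omega}=\mathbb{N}_0\cup\{\omega\}$, $\mathbb{N}_1^{\omega}=\mathbb{N}_1\cup\{\omega\}$ with $\omega$ an infinite element. A multiset over $X$ is a function $f:X\to\mathbb{N}_0^{\omega}$; its support is $\{x:f(x)>0\}$. A possibly infinite sum of grades equals the sum of its non-zero summands if there are finitely many of them and none is $\omega$, and $\omega$ otherwise. For $k\in\mathbb{N}_0$ and a group $J$, $P(J,k)$ is the set of functions $\delta:J\to\mathbb{N}_0$ with $\sum_{i\in J}\delta(i)=k$. $\mathcal{L}_0$: $\alpha::=p\mid\neg\alpha\mid\alpha\wedge\alpha\mid\triangle_i^k\alpha$ ($p\in\mathit{Atm}$, $i\in\mathit{Agt}$, $k\in\mathbb{N}_1^{\omega}$). $\mathcal{L}$: $\varphi::=\alpha\mid\neg\varphi\mid\varphi\wedge\varphi\mid\Box_J^k\varphi$ ($\alpha\in\mathcal{L}_0$, $J$ a group, $k\in\mathbb{N}_0$).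 Consider tuples $M=(W,\mathcal{D},\rho,\mathcal{V})$ with $W$ a set of worlds, $\mathcal{D}:\mathit{Agt}\times W\to$ (multisets over $\mathcal{L}_0$), $\rho:2^{\mathit{Agt}*}\times W\times W\to\mathbb{N}_0^{\omega}$, $\mathcal{V}:\mathit{Atm}\to 2^W$, with satisfaction $(M,w)\models p$ iff $w\in\mathcal{V}(p)$; Boolean clauses as usual; $(M,w)\models\triangle_i^k\alpha$ iff $\mathcal{D}(i,w)(\alpha)\ge k$; $(M,w)\models\Box_J^k\varphi$ iff for all $u\in W$ with $\rho(J,w,u)\le k$, $(M,u)\models\varphi$. Such an $M$ is an NGDM if for all groups $J$ and $w,u\in W$: $\rho(J,w,u)=\sum_{\alpha\in\mathcal{L}_0,(M,u)\not\models\alpha}\sum_{i\in J}\mathcal{D}(i,w)(\alpha)$. Such an $M$ is a QNGDM if for every group $J$ and $w,u\in W$ with $\rho(J,w,u)\ne\omega$: (i) $\rho(J,w,u)\ge\sum_{\alpha\in\mathcal{L}_0,(M,u)\not\models\alpha}\sum_{i\in J}\mathcal{D}(i,w)(\alpha)$; and (ii) there is $\delta\in P(J,\rho(J,w,u))$ with $\sum_{i\in J'}\delta(i)\ge\rho(J',w,u)$ for every non-empty $J'\subset J$. A model is finite if $W$ is finite and each $\mathcal{D}(i,w)$ has finite support. *)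

theory Defs
  imports Main "HOL-Library.Extended_Nat"
begin

(* Atoms: nat (countably infinite). Agents: a finite type 'agt.
   Grades in N_0^omega are enat; the N_1^omega restriction on the
   grade of triangle formulas is imposed by well-formedness. *)

datatype 'agt fm0 =
    Atom nat
  | Neg0 "'agt fm0"
  | Conj0 "'agt fm0" "'agt fm0"
  | Tri 'agt enat "'agt fm0"

datatype 'agt fm =
    Base "'agt fm0"
  | Neg "'agt fm"
  | Conj "'agt fm" "'agt fm"
  | Box "'agt set" nat "'agt fm"

fun wf0 :: "'agt fm0 \<Rightarrow> bool" where
  "wf0 (Atom p) = True"
| "wf0 (Neg0 a) = wf0 a"
| "wf0 (Conj0 a b) = (wf0 a \<and> wf0 b)"
| "wf0 (Tri i k a) = (k \<ge> 1 \<and> wf0 a)"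

fun wf :: "'agt fm \<Rightarrow> bool" where
  "wf (Base a) = wf0 a"
| "wf (Neg f) = wf f"
| "wf (Conj f g) = (wf f \<and> wf g)"
| "wf (Box J k f) = (J \<noteq> {} \<and> wf f)"

record ('agt, 'w) model =
  W :: "'w set"
  D :: "'agt \<Rightarrow> 'w \<Rightarrow> 'agt fm0 \<Rightarrow> enat"
  rho :: "'agt set \<Rightarrow> 'w \<Rightarrow> 'w \<Rightarrow> enat"
  V :: "nat \<Rightarrow> 'w set"

fun sat0 :: "('agt, 'w) model \<Rightarrow> 'w \<Rightarrow> 'agt fm0 \<Rightarrow> bool" where
  "sat0 M w (Atom p) = (w \<in> V M p)"
| "sat0 M w (Neg0 a) = (\<not> sat0 M w a)"
| "sat0 M w (Conj0 a b) = (sat0 M w a \<and> sat0 M w b)"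
| "sat0 M w (Tri i k a) = (D M i w a \<ge> k)"

fun sat :: "('agt, 'w) model \<Rightarrow> 'w \<Rightarrow> 'agt fm \<Rightarrow> bool" where
  "sat M w (Base a) = sat0 M w a"
| "sat M w (Neg f) = (\<not> sat M w f)"
| "sat M w (Conj f g) = (sat M w f \<and> sat M w g)"
| "sat M w (Box J k f) = (\<forall>u \<in> W M. rho M J w u \<le> enat k \<longrightarrow> sat M u f)"

definition gsum :: "('x \<Rightarrow> enat) \<Rightarrow> 'x set \<Rightarrow> enat" where
  "gsum f A = (if finite {x \<in> A. f x \<noteq> 0} \<and> (\<forall>x \<in> A. f x \<noteq> \<infinity>)
               then sum f {x \<in> A. f x \<noteq> 0} else \<infinity>)"

definition doxsum :: "('agt, 'w) model \<Rightarrow> 'agt set \<Rightarrow> 'w \<Rightarrow> 'w \<Rightarrow> enat" where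
  "doxsum M J w u =
     gsum (\<lambda>a. gsum (\<lambda>i. D M i w a) J) {a. wf0 a \<and> \<not> sat0 M u a}"

definition NGDM :: "('agt, 'w) model \<Rightarrow> bool" where
  "NGDM M \<longleftrightarrow> (\<forall>J w u. J \<noteq> {} \<longrightarrow> w \<in> W M \<longrightarrow> u \<in> W M \<longrightarrow>
                 rho M J w u = doxsum M J w u)"

definition QNGDM :: "('agt, 'w) model \<Rightarrow> bool" where
  "QNGDM M \<longleftrightarrow> (\<forall>J w u. J \<noteq> {} \<longrightarrow> w \<in> W M \<longrightarrow> u \<in> W M \<longrightarrow> rho M J w u \<noteq> \<infinity> \<longrightarrow>
      rho M J w u \<ge> doxsum M J w u \<and>
      (\<exists>\<delta> :: 'agt \<Rightarrow> nat. enat (sum \<delta> J) = rho M J w u \<and>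
          (\<forall>J'. J' \<noteq> {} \<longrightarrow> J' \<subset> J \<longrightarrow> enat (sum \<delta> J') \<ge> rho M J' w u)))"

definition finite_model :: "('agt, 'w) model \<Rightarrow> bool" where
  "finite_model M \<longleftrightarrow> finite (W M) \<and>
     (\<forall>i. \<forall>w \<in> W M. finite {a. wf0 a \<and> D M i w a > 0})"

end

theory Submission
  imports Defs
begin

lemma enat_sum_inf: "finite B \<Longrightarrow> x \<in> B \<Longrightarrow> f x = (\<infinity>::enat) \<Longrightarrow> sum f B = \<infinity>"
  by (simp add: sum.remove)

lemma gsum_eq:
  assumes "finite B" "{x \<in> A. f x \<noteq> 0} \<subseteq> B" "B \<subseteq> A"
  shows "gsum f A = sum f B"
proof -
  have fin: "finite {x \<in> A. f x \<noteq> 0}" using assms(1,2) by (rule finite_subset[rotated])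
  have s: "sum f {x \<in> A. f x \<noteq> 0} = sum f B"
  proof (rule sum.mono_neutral_left[OF assms(1,2)])
    show "\<forall>i\<in>B - {x \<in> A. f x \<noteq> 0}. f i = 0" using assms(3) by blast
  qed
  show ?thesis
  proof (cases "\<forall>x \<in> A. f x \<noteq> \<infinity>")
    case True
    then have "gsum f A = sum f {x \<in> A. f x \<noteq> 0}" unfolding gsum_def using True fin by (intro if_P conjI)
    then show ?thesis using s by simp
  next
    case False
    then obtain x where "x \<in> A" "f x = \<infinity>" by blast
    then have "x \<in> B" using assms(2) by auto
    then have "sum f B = \<infinity>" using enat_sum_inf[of B x f] assms(1) \<open>f x = \<infinity>\<close> by simp
    moreover have "gsum f A = \<infinity>" unfolding gsum_def using False by (intro if_not_P) blast
    ultimately show ?thesis by simp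
  qed
qed
lemma doxsum_sum:
  fixes M :: "('agt::finite,'w) model"
  assumes "finite B"
    "\<And>a i. wf0 a \<Longrightarrow> \<not> sat0 M u a \<Longrightarrow> i \<in> J \<Longrightarrow> D M i w a \<noteq> 0 \<Longrightarrow> a \<in> B"
    "\<And>a. a \<in> B \<Longrightarrow> wf0 a \<and> \<not> sat0 M u a"
  shows "doxsum M J w u = (\<Sum>i\<in>J. \<Sum>a\<in>B. D M i w a)"
proof -
  have inner: "gsum (\<lambda>i. D M i w a) J = sum (\<lambda>i. D M i w a) J" for a
    by (rule gsum_eq) auto
  have "doxsum M J w u = gsum (\<lambda>a. \<Sum>i\<in>J. D M i w a) {a. wf0 a \<and> \<not> sat0 M u a}"
    unfolding doxsum_def inner ..
  also have "\<dots> = (\<Sum>a\<in>B. \<Sum>i\<in>J. D M i w a)"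
  proof (rule gsum_eq)
    show "finite B" by fact
    show "{x \<in> {a. wf0 a \<and> \<not> sat0 M u a}. (\<Sum>i\<in>J. D M i w x) \<noteq> 0} \<subseteq> B"
    proof
      fix a assume "a \<in> {x \<in> {a. wf0 a \<and> \<not> sat0 M u a}. (\<Sum>i\<in>J. D M i w x) \<noteq> 0}"
      then have h: "wf0 a" "\<not> sat0 M u a" "(\<Sum>i\<in>J. D M i w a) \<noteq> 0" by auto
      then obtain i where "i \<in> J" "D M i w a \<noteq> 0" by (meson sum.neutral)
      then show "a \<in> B" using assms(2) h by blast
    qed
    show "B \<subseteq> {a. wf0 a \<and> \<not> sat0 M u a}" using assms(3) by auto
  qed
  also have "\<dots> = (\<Sum>i\<in>J. \<Sum>a\<in>B. D M i w a)" by (rule sum.swap)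
  finally show ?thesis .
qed


lemma sat0_iso:
  fixes M' :: "('agt,'v) model" and f :: "'v \<Rightarrow> nat"
  assumes inj: "inj_on f (W M')"
  defines "M2 \<equiv> \<lparr>W = f ` W M', D = (\<lambda>i n. D M' i (inv_into (W M') f n)),
       rho = (\<lambda>J n m. rho M' J (inv_into (W M') f n) (inv_into (W M') f m)),
       V = (\<lambda>p. f ` (V M' p \<inter> W M'))\<rparr>"
  shows "y \<in> W M' \<Longrightarrow> sat0 M2 (f y) a = sat0 M' y a"
proof (induction a)
  case (Atom p)
  then show ?case using inj by (auto simp: M2_def inj_on_image_mem_iff)
next
  case (Tri i k a)
  then show ?case using inj by (simp add: M2_def)
qed (auto)

lemma to_nat:
  fixes M' :: "('agt::finite,'v) model"
  assumes fin: "finite_model M'" and ng: "NGDM M'" and x: "x \<in> W M'" and s: "sat M' x \<phi>"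
  shows "\<exists>(M'' :: ('agt, nat) model) w''. finite_model M'' \<and> NGDM M'' \<and> w'' \<in> W M'' \<and> sat M'' w'' \<phi>"
proof -
  have "finite (W M')" using fin unfolding finite_model_def by (rule conjunct1)
  have "\<exists>f::'v \<Rightarrow> nat. inj_on f (W M')"
    using finite_imp_inj_to_nat_seg[OF \<open>finite (W M')\<close>] by (elim exE conjE) (rule exI)
  then obtain f :: "'v \<Rightarrow> nat" where inj: "inj_on f (W M')" by (elim exE)
  define g where "g = inv_into (W M') f"
  have gf: "y \<in> W M' \<Longrightarrow> g (f y) = y" for y using inj g_def by simp
  define M2 where "M2 \<equiv> \<lparr>W = f ` W M', D = (\<lambda>i n. D M' i (inv_into (W M') f n)),
       rho = (\<lambda>J n m. rho M' J (inv_into (W M') f n) (inv_into (W M') f m)),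
       V = (\<lambda>p. f ` (V M' p \<inter> W M'))\<rparr>"
  have s0: "y \<in> W M' \<Longrightarrow> sat0 M2 (f y) a = sat0 M' y a" for y a
    using sat0_iso[OF inj] unfolding M2_def by blast
  have sat_eq: "y \<in> W M' \<Longrightarrow> sat M2 (f y) \<psi> = sat M' y \<psi>" for y and \<psi> :: "'agt fm"
  proof (induction \<psi> arbitrary: y)
    case (Base a) then show ?case using s0 by simp
  next
    case (Box J k \<psi>)
    have "sat M2 (f y) (Box J k \<psi>) = (\<forall>u\<in>W M'. rho M2 J (f y) (f u) \<le> enat k \<longrightarrow> sat M2 (f u) \<psi>)"
      by (simp add: M2_def)
    also have "\<dots> = (\<forall>u\<in>W M'. rho M' J y u \<le> enat k \<longrightarrow> sat M' u \<psi>)"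
      using Box gf by (auto simp: M2_def g_def)
    finally show ?case by simp
  qed auto
  have Df: "y \<in> W M' \<Longrightarrow> D M2 i (f y) = D M' i y" for i y
    using gf by (simp add: M2_def g_def[symmetric])
  have dox: "y \<in> W M' \<Longrightarrow> z \<in> W M' \<Longrightarrow> doxsum M2 J (f y) (f z) = doxsum M' J y z" for J y z
  proof -
    assume y: "y \<in> W M'" and z: "z \<in> W M'"
    have "{a. wf0 a \<and> \<not> sat0 M2 (f z) a} = {a. wf0 a \<and> \<not> sat0 M' z a}"
      using s0[OF z] by simp
    then show ?thesis unfolding doxsum_def using Df[OF y] by simp
  qed
  have "finite_model M2" unfolding finite_model_def
  proof (intro conjI allI ballI)
    show "finite (W M2)" using \<open>finite (W M')\<close> by (simp add: M2_def)
    fix i n assume "n \<in> W M2"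
    then obtain y where y: "y \<in> W M'" "n = f y" by (auto simp: M2_def)
    have "D M2 i n = D M' i y" using y Df by simp
    then show "finite {a. wf0 a \<and> D M2 i n a > 0}" using fin y unfolding finite_model_def by simp
  qed
  moreover have "NGDM M2"
    unfolding NGDM_def
  proof (intro allI impI)
    fix J :: "'agt set" and n m assume "J \<noteq> {}" "n \<in> W M2" "m \<in> W M2"
    then obtain y z where yz: "y \<in> W M'" "z \<in> W M'" "n = f y" "m = f z" by (auto simp: M2_def)
    have "rho M2 J n m = rho M' J y z" using yz gf by (simp add: M2_def g_def[symmetric])
    also have "\<dots> = doxsum M' J y z" using ng \<open>J \<noteq> {}\<close> yz unfolding NGDM_def by blast
    also have "\<dots> = doxsum M2 J n m" using dox yz by simp
    finally show "rho M2 J n m = doxsum M2 J n m" .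
  qed
  moreover have "f x \<in> W M2" using x by (simp add: M2_def)
  moreover have "sat M2 (f x) \<phi>" using sat_eq x s by simp
  ultimately show ?thesis by blast
qed


fun atoms0 :: "'agt fm0 \<Rightarrow> nat set" where
  "atoms0 (Atom p) = {p}"
| "atoms0 (Neg0 a) = atoms0 a"
| "atoms0 (Conj0 a b) = atoms0 a \<union> atoms0 b"
| "atoms0 (Tri i k a) = atoms0 a"

fun atoms :: "'agt fm \<Rightarrow> nat set" where
  "atoms (Base a) = atoms0 a"
| "atoms (Neg f) = atoms f"
| "atoms (Conj f g) = atoms f \<union> atoms g"
| "atoms (Box J k f) = atoms f"

lemma finite_atoms0: "finite (atoms0 a)" by (induction a) auto
lemma finite_atoms: "finite (atoms f)" by (induction f) (auto simp: finite_atoms0)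

lemma sat0_rho_upd: "sat0 (M\<lparr>rho := r\<rparr>) x a = sat0 M x a"
  by (induction a) auto

lemma doxsum_rho_upd: "doxsum (M\<lparr>rho := r\<rparr>) J x y = doxsum M J x y"
  unfolding doxsum_def sat0_rho_upd by simp

lemma sum_enat: "finite J \<Longrightarrow> (\<Sum>i\<in>J. enat (f i)) = enat (sum f J)"
  by (induction rule: finite_induct) (simp_all add: zero_enat_def)

lemma enat_le_add_diff: "(b::enat) \<le> a + (b - a)"
  by (cases a; cases b) simp_all

lemma enat_add_diff: "(a::enat) \<le> b \<Longrightarrow> b \<noteq> \<infinity> \<Longrightarrow> a + (b - a) = b"
  by (cases a; cases b) simp_all


theorem lemma2:
  fixes \<phi> :: "('agt::finite) fm" and M :: "('agt, 'w) model" and w :: 'w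
  assumes "wf \<phi>" and "finite_model M" and "QNGDM M" and "w \<in> W M" and "sat M w \<phi>"
  shows "\<exists>(M'' :: ('agt, nat) model) w''. finite_model M'' \<and> NGDM M'' \<and> w'' \<in> W M'' \<and> sat M'' w'' \<phi>"
proof -
  note fm = assms(2)[unfolded finite_model_def]
  have finW: "finite (W M)" using fm by (rule conjunct1)
  have finS: "finite {a. wf0 a \<and> D M i v a > 0}" if "v \<in> W M" for i v
    using fm that by simp
  define Bs where "Bs v = {a. wf0 a \<and> (\<exists>i. D M i v a > 0)}" for v
  have finBs: "finite (Bs v)" if v: "v \<in> W M" for v
  proof -
    have "Bs v = (\<Union>i. {a. wf0 a \<and> D M i v a > 0})" unfolding Bs_def by blast
    then show ?thesis using finS[OF v] by simp
  qed
  define At where "At = atoms \<phi> \<union> (\<Union>v\<in>W M. \<Union>a\<in>Bs v. atoms0 a)"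
  have "finite At" unfolding At_def using finW finBs by (simp add: finite_atoms finite_atoms0)
  then obtain N where N: "At \<subseteq> {..<N}" using finite_nat_bounded by blast
  define W' where "W' = W M \<times> {Y :: 'agt set. Y \<noteq> {}}"
  have finW': "finite W'" unfolding W'_def using finW by simp
  have "\<exists>c::'w \<times> 'agt set \<Rightarrow> nat. inj_on c W'"
    using finite_imp_inj_to_nat_seg[OF finW'] by (elim exE conjE) (rule exI)
  then obtain c :: "'w \<times> 'agt set \<Rightarrow> nat" where c: "inj_on c W'" by (elim exE)
  define new where "new y = (Neg0 (Atom (N + c y)) :: 'agt fm0)" for y :: "'w \<times> 'agt set"
  define P where "P v u Y \<delta> \<longleftrightarrow> enat (sum \<delta> Y) = rho M Y v u \<and>
          (\<forall>J'. J' \<noteq> {} \<longrightarrow> J' \<subset> Y \<longrightarrow> enat (sum \<delta> J') \<ge> rho M J' v u)" for v u Y and \<delta> :: "'agt \<Rightarrow> nat"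
  define dl where "dl v u Y = (SOME \<delta>. P v u Y \<delta>)" for v u Y
  have dl: "P v u Y (dl v u Y)" if "v \<in> W M" "u \<in> W M" "Y \<noteq> {}" "rho M Y v u \<noteq> \<infinity>" for v u Y
  proof -
    have "\<exists>\<delta>. P v u Y \<delta>" using assms(3) that unfolding QNGDM_def P_def by blast
    then show ?thesis unfolding dl_def by (rule someI_ex)
  qed
  have qi: "doxsum M J v u \<le> rho M J v u" if "v \<in> W M" "u \<in> W M" "J \<noteq> {}" "rho M J v u \<noteq> \<infinity>" for J v u
    using assms(3) that unfolding QNGDM_def by blast
  define Dl where "Dl v u Y i = (if rho M Y v u \<noteq> \<infinity> \<and> i \<in> Y then enat (dl v u Y i) else \<infinity>)" for v u Y i
  define dd where "dd i v u = (\<Sum>a\<in>{a\<in>Bs v. \<not> sat0 M u a}. D M i v a)" for i v u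
  define e where "e i v y = Dl v (fst y) (snd y) i - dd i v (fst y)" for i v y
  define M0 :: "('agt, 'w \<times> 'agt set) model" where "M0 = \<lparr>W = W',
      D = (\<lambda>i x a. if \<exists>y\<in>W'. a = new y then e i (fst x) (SOME y. y \<in> W' \<and> a = new y) else D M i (fst x) a),
      rho = (\<lambda>_ _ _. 0),
      V = (\<lambda>p. {y. (p < N \<and> fst y \<in> V M p) \<or> (y \<in> W' \<and> p = N + c y)})\<rparr>"
  define M'' where "M'' = M0\<lparr>rho := doxsum M0\<rparr>"
  have atBs: "atoms0 a \<subseteq> {..<N}" if "v \<in> W M" "a \<in> Bs v" for v a
    using N that unfolding At_def by blast
  have notnew: "a \<noteq> new y" if "atoms0 a \<subseteq> {..<N}" for a y
    using that by (auto simp: new_def)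
  have Dnew: "D M0 i x (new y) = e i (fst x) y" if y: "y \<in> W'" for i x y
  proof -
    have "(SOME y'. y' \<in> W' \<and> new y = new y') = y"
    proof (rule some_equality)
      show "y \<in> W' \<and> new y = new y" using y by simp
      show "y' = y" if "y' \<in> W' \<and> new y = new y'" for y'
        using that y c unfolding new_def inj_on_def by simp
    qed
    then show ?thesis using y unfolding M0_def by auto
  qed
  have Dold: "D M0 i x a = D M i (fst x) a" if "atoms0 a \<subseteq> {..<N}" for i x a
    using notnew[OF that] unfolding M0_def by auto
  have sat_old: "sat0 M0 x a = sat0 M (fst x) a" if "atoms0 a \<subseteq> {..<N}" for a x
    using that
  proof (induction a)
    case (Atom p) then show ?case by (simp add: M0_def)
  next
    case (Tri i k b) then show ?case using Dold[of b i x] by simp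
  qed simp_all
  have sat_new: "sat0 M0 y (new y') = (y \<noteq> y')" if "y \<in> W'" "y' \<in> W'" for y y'
    using that c unfolding M0_def new_def inj_on_def by auto
  have doxM: "doxsum M J v u = (\<Sum>i\<in>J. dd i v u)" if "v \<in> W M" for J v u
    unfolding dd_def
  proof (rule doxsum_sum)
    show "finite {a \<in> Bs v. \<not> sat0 M u a}" using finBs[OF that] by simp
    show "a \<in> {a \<in> Bs v. \<not> sat0 M u a}" if "wf0 a" "\<not> sat0 M u a" "i \<in> J" "D M i v a \<noteq> 0" for a i
      using that unfolding Bs_def by (auto simp: zero_less_iff_neq_zero)
    show "wf0 a \<and> \<not> sat0 M u a" if "a \<in> {a \<in> Bs v. \<not> sat0 M u a}" for a
      using that unfolding Bs_def by blast
  qed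
  have doxE: "doxsum M0 J x y = (\<Sum>i\<in>J. dd i (fst x) (fst y) + e i (fst x) y)"
    if x: "x \<in> W'" and y: "y \<in> W'" for J x y
  proof -
    have v: "fst x \<in> W M" using x unfolding W'_def by auto
    define B1 where "B1 = {a \<in> Bs (fst x). \<not> sat0 M (fst y) a}"
    have finB1: "finite B1" unfolding B1_def using finBs[OF v] by simp
    have atB1: "atoms0 a \<subseteq> {..<N}" if "a \<in> B1" for a
      using atBs[OF v] that unfolding B1_def by blast
    have nB: "new y \<notin> B1" using atB1 notnew by blast
    have "doxsum M0 J x y = (\<Sum>i\<in>J. \<Sum>a\<in>insert (new y) B1. D M0 i x a)"
    proof (rule doxsum_sum)
      show "finite (insert (new y) B1)" using finB1 by simp
      show "a \<in> insert (new y) B1" if a: "wf0 a" "\<not> sat0 M0 y a" "i \<in> J" "D M0 i x a \<noteq> 0" for a i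
      proof (cases "\<exists>y'\<in>W'. a = new y'")
        case True
        then obtain y' where "y' \<in> W'" "a = new y'" by blast
        then show ?thesis using sat_new[OF y] a by auto
      next
        case False
        then have "D M i (fst x) a \<noteq> 0" using a unfolding M0_def by simp
        then have "a \<in> Bs (fst x)" using a unfolding Bs_def by (simp add: zero_less_iff_neq_zero) (rule exI)
        moreover have "sat0 M0 y a = sat0 M (fst y) a" using sat_old atBs[OF v calculation] by blast
        ultimately show ?thesis using a unfolding B1_def by simp
      qed
      show "wf0 a \<and> \<not> sat0 M0 y a" if "a \<in> insert (new y) B1" for a
      proof (cases "a = new y")
        case True then show ?thesis using sat_new[OF y y] by (simp add: new_def)
      next
        case False
        then have a: "a \<in> B1" using that by simp
        then show ?thesis using sat_old[OF atB1[OF a]] unfolding B1_def Bs_def by simp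
      qed
    qed
    also have "\<dots> = (\<Sum>i\<in>J. e i (fst x) y + dd i (fst x) (fst y))"
    proof (rule sum.cong[OF refl])
      fix i
      have "(\<Sum>a\<in>insert (new y) B1. D M0 i x a) = D M0 i x (new y) + (\<Sum>a\<in>B1. D M0 i x a)"
        using finB1 nB by simp
      also have "(\<Sum>a\<in>B1. D M0 i x a) = (\<Sum>a\<in>B1. D M i (fst x) a)"
        using Dold atB1 by simp
      finally show "(\<Sum>a\<in>insert (new y) B1. D M0 i x a) = e i (fst x) y + dd i (fst x) (fst y)"
        using Dnew[OF y] unfolding dd_def B1_def by simp
    qed
    finally show ?thesis by (simp add: add.commute)
  qed
  have lowA: "rho M J (fst x) (fst y) \<le> doxsum M0 J x y"
    if x: "x \<in> W'" and y: "y \<in> W'" and J: "J \<noteq> {}" for J x y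
  proof -
    obtain v Z where xv: "x = (v,Z)" by (cases x)
    obtain u Y where yu: "y = (u,Y)" by (cases y)
    have v: "v \<in> W M" and u: "u \<in> W M" and Y: "Y \<noteq> {}" using x y xv yu unfolding W'_def by auto
    have "(\<Sum>i\<in>J. Dl v u Y i) \<le> (\<Sum>i\<in>J. dd i v u + e i v y)"
      by (rule sum_mono) (simp add: e_def yu enat_le_add_diff)
    also have "\<dots> = doxsum M0 J x y" using doxE[OF x y] xv yu by simp
    finally have A: "(\<Sum>i\<in>J. Dl v u Y i) \<le> doxsum M0 J x y" .
    have B: "rho M J v u \<le> (\<Sum>i\<in>J. Dl v u Y i)"
    proof (cases "rho M Y v u \<noteq> \<infinity> \<and> J \<subseteq> Y")
      case True
      have "(\<Sum>i\<in>J. Dl v u Y i) = (\<Sum>i\<in>J. enat (dl v u Y i))"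
      proof (rule sum.cong[OF refl])
        fix i assume "i \<in> J"
        then show "Dl v u Y i = enat (dl v u Y i)" using True unfolding Dl_def by auto
      qed
      also have "\<dots> = enat (sum (dl v u Y) J)" by (simp add: sum_enat)
      finally have s: "(\<Sum>i\<in>J. Dl v u Y i) = enat (sum (dl v u Y) J)" .
      have Pd: "P v u Y (dl v u Y)" using dl v u Y True by blast
      show ?thesis
      proof (cases "J = Y")
        case True then show ?thesis using s Pd unfolding P_def by simp
      next
        case False
        then have JY: "J \<subset> Y" using True by blast
        have "J' \<noteq> {} \<longrightarrow> J' \<subset> Y \<longrightarrow> enat (sum (dl v u Y) J') \<ge> rho M J' v u" for J'
          using Pd unfolding P_def by blast
        then show ?thesis using s JY J by simp
      qed
    next
      case False
      have "\<exists>i\<in>J. Dl v u Y i = \<infinity>"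
      proof (cases "rho M Y v u = \<infinity>")
        case True
        obtain i where "i \<in> J" using J by blast
        then show ?thesis using True unfolding Dl_def by auto
      next
        case F2: False
        then have "\<not> J \<subseteq> Y" using False by blast
        then obtain i where "i \<in> J" "i \<notin> Y" by blast
        then show ?thesis unfolding Dl_def by auto
      qed
      then obtain i where i: "i \<in> J" "Dl v u Y i = \<infinity>" by blast
      then have "(\<Sum>i\<in>J. Dl v u Y i) = \<infinity>" using enat_sum_inf[of J i "Dl v u Y"] by simp
      then show ?thesis by simp
    qed
    show ?thesis using A B xv yu by simp
  qed
  have upB: "doxsum M0 J (v,Z) (u,J) \<le> rho M J v u"
    if vZ: "(v,Z) \<in> W'" and u: "u \<in> W M" and J: "J \<noteq> {}" and rf: "rho M J v u \<noteq> \<infinity>" for v Z u J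
  proof -
    have v: "v \<in> W M" using vZ unfolding W'_def by simp
    have y: "(u,J) \<in> W'" using u J unfolding W'_def by simp
    have Pd: "P v u J (dl v u J)" using dl v u J rf by blast
    have ddle: "dd i v u \<le> enat (dl v u J i)" if i: "i \<in> J" for i
    proof -
      have r: "rho M {i} v u \<le> enat (dl v u J i)"
      proof (cases "J = {i}")
        case True then show ?thesis using Pd unfolding P_def by simp
      next
        case False then have iJ: "{i} \<subset> J" using i by blast
        have "J' \<noteq> {} \<longrightarrow> J' \<subset> J \<longrightarrow> enat (sum (dl v u J) J') \<ge> rho M J' v u" for J'
          using Pd unfolding P_def by blast
        from this[of "{i}"] show ?thesis using iJ by simp
      qed
      then have "rho M {i} v u \<noteq> \<infinity>" by (cases "rho M {i} v u") auto
      then have "doxsum M {i} v u \<le> rho M {i} v u" using qi v u by blast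
      then show ?thesis using doxM[OF v] r by simp
    qed
    have "doxsum M0 J (v,Z) (u,J) = (\<Sum>i\<in>J. dd i v u + e i v (u,J))" using doxE[OF vZ y] by simp
    also have "\<dots> = (\<Sum>i\<in>J. enat (dl v u J i))"
    proof (rule sum.cong[OF refl])
      fix i assume i: "i \<in> J"
      have "e i v (u,J) = enat (dl v u J i) - dd i v u" unfolding e_def Dl_def using i rf by simp
      then show "dd i v u + e i v (u,J) = enat (dl v u J i)" using enat_add_diff[OF ddle[OF i]] by simp
    qed
    also have "\<dots> = enat (sum (dl v u J) J)" by (simp add: sum_enat)
    also have "\<dots> = rho M J v u" using Pd unfolding P_def by simp
    finally show ?thesis by simp
  qed
  have WM'': "W M'' = W'" by (simp add: M''_def M0_def)
  have rM'': "rho M'' = doxsum M0" by (simp add: M''_def)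
  have key: "sat M'' x \<psi> = sat M (fst x) \<psi>" if "wf \<psi>" "atoms \<psi> \<subseteq> {..<N}" "x \<in> W'" for \<psi> x
    using that
  proof (induction \<psi> arbitrary: x)
    case (Base a) then show ?case using sat_old[of a x] by (simp add: M''_def sat0_rho_upd)
  next
    case (Neg \<psi>) then show ?case by simp
  next
    case (Conj \<psi>1 \<psi>2) then show ?case by simp
  next
    case (Box J k \<psi>)
    have J: "J \<noteq> {}" and wfp: "wf \<psi>" and atp: "atoms \<psi> \<subseteq> {..<N}" using Box.prems by auto
    obtain v Z where xv: "x = (v,Z)" by (cases x)
    have xW: "(v,Z) \<in> W'" using Box.prems xv by simp
    have v: "v \<in> W M" using xW unfolding W'_def by simp
    have lhs: "sat M'' x (Box J k \<psi>) = (\<forall>y\<in>W'. doxsum M0 J x y \<le> enat k \<longrightarrow> sat M'' y \<psi>)"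
      unfolding sat.simps WM'' rM'' ..
    show ?case
    proof
      assume L: "sat M'' x (Box J k \<psi>)"
      show "sat M (fst x) (Box J k \<psi>)"
        unfolding sat.simps xv fst_conv
      proof (intro ballI impI)
        fix u assume u: "u \<in> W M" and r: "rho M J v u \<le> enat k"
        then have rf: "rho M J v u \<noteq> \<infinity>" by (cases "rho M J v u") auto
        have y: "(u,J) \<in> W'" using u J unfolding W'_def by simp
        have "doxsum M0 J (v,Z) (u,J) \<le> enat k" using upB[OF xW u J rf] r by (rule order_trans)
        moreover have "\<forall>y\<in>W'. doxsum M0 J x y \<le> enat k \<longrightarrow> sat M'' y \<psi>" using L unfolding lhs .
        ultimately have "sat M'' (u,J) \<psi>" using y unfolding xv by blast
        then show "sat M u \<psi>" using Box.IH[OF wfp atp y] by simp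
      qed
    next
      assume R: "sat M (fst x) (Box J k \<psi>)"
      show "sat M'' x (Box J k \<psi>)" unfolding lhs
      proof (intro ballI impI)
        fix y assume y: "y \<in> W'" and d: "doxsum M0 J x y \<le> enat k"
        have "rho M J (fst x) (fst y) \<le> enat k" using lowA[OF Box.prems(3) y J] d by (rule order_trans)
        moreover have "fst y \<in> W M" using y unfolding W'_def by auto
        ultimately have "sat M (fst y) \<psi>" using R by simp
        then show "sat M'' y \<psi>" using Box.IH[OF wfp atp y] by simp
      qed
    qed
  qed
  have x0: "(w, UNIV) \<in> W'" using assms(4) unfolding W'_def by simp
  have atphi: "atoms \<phi> \<subseteq> {..<N}" using N unfolding At_def by blast
  have s'': "sat M'' (w, UNIV) \<phi>" using key[OF assms(1) atphi x0] assms(5) by simp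
  have fin'': "finite_model M''"
    unfolding finite_model_def
  proof (intro conjI allI ballI)
    show "finite (W M'')" using finW' WM'' by simp
    fix i x assume "x \<in> W M''"
    then have x: "x \<in> W'" using WM'' by simp
    have v: "fst x \<in> W M" using x unfolding W'_def by auto
    have "{a. wf0 a \<and> D M'' i x a > 0} \<subseteq> Bs (fst x) \<union> new ` W'"
    proof
      fix a assume a: "a \<in> {a. wf0 a \<and> D M'' i x a > 0}"
      show "a \<in> Bs (fst x) \<union> new ` W'"
      proof (cases "\<exists>y\<in>W'. a = new y")
        case True then show ?thesis by blast
      next
        case False
        then have "D M'' i x a = D M i (fst x) a" by (simp add: M''_def M0_def)
        then show ?thesis using a unfolding Bs_def by auto
      qed
    qed
    moreover have "finite (Bs (fst x) \<union> new ` W')" using finBs[OF v] finW' by simp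
    ultimately show "finite {a. wf0 a \<and> D M'' i x a > 0}" by (rule finite_subset)
  qed
  have ng'': "NGDM M''" unfolding NGDM_def rM'' by (simp add: M''_def doxsum_rho_upd)
  show ?thesis using to_nat[OF fin'' ng'' _ s''] x0 WM'' by blast
qed

end
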